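(* For every integer $n\ge1$, $$F_{2n-2}=\sum_{(a_1,\dots,a_k)\in C(n)}(2^{a_1-1}-1)(2^{a_2-1}-1)\cdots(2^{a_k-1}-1).$$
   Context: $C(n)$ is the set of all compositions $(a_1,\dots,a_k)$ of $n$ (sequences of positive integers with sum $n$, any number of parts). Fibonacci numbers: $F_0=0$, $F_1=1$, $F_n=F_{n-1}+F_{n-2}$. *)

theory Defs
  imports Main "HOL-Number_Theory.Fib"
begin

definition compositions :: "nat \<Rightarrow> nat list set" where
  "compositions n = {as. (\<forall>a\<in>set as. 0 < a) \<and> sum_list as = n}"

end

theory Submission
  imports Defs
begin

definition w :: "nat \<Rightarrow> int" where "w k = 2 ^ (k - 1) - 1"

definition g :: "nat list \<Rightarrow> int" where "g as = prod_list (map w as)"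

definition S :: "nat \<Rightarrow> int" where "S n = (\<Sum>as\<in>compositions n. g as)"

lemma g_cons: "g (a # as) = w a * g as" by (simp add: g_def)

lemma g_alt: "g as = (\<Prod>i<length as. (2::int) ^ (as ! i - 1) - 1)"
  unfolding g_def w_def by (simp add: prod.list_conv_set_nth lessThan_atLeast0)

lemma comp_fin: "finite (compositions n)"
proof -
  have "compositions n \<subseteq> {xs. set xs \<subseteq> {..n} \<and> length xs \<le> n}"
  proof
    fix xs assume "xs \<in> compositions n"
    hence p: "\<forall>a\<in>set xs. 0 < a" and s: "sum_list xs = n" by (auto simp: compositions_def)
    have "\<forall>a\<in>set xs. a \<le> n" using s member_le_sum_list by blast
    moreover have "length xs \<le> sum_list xs" using p
      by (induction xs) auto
    ultimately show "xs \<in> {xs. set xs \<subseteq> {..n} \<and> length xs \<le> n}" using s by auto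
  qed
  moreover have "finite {xs. set xs \<subseteq> {..n} \<and> length xs \<le> n}"
    by (rule finite_lists_length_le) simp
  ultimately show ?thesis by (rule finite_subset)
qed

lemma comp0: "compositions 0 = {[]}"
  by (auto simp: compositions_def) (metis list.set_intros(1) neq_Nil_conv not_gr0)

lemma compSuc: "compositions (Suc m) = (\<Union>k\<in>{..<Suc m}. (#) (Suc k) ` compositions (m - k))"
proof
  show "compositions (Suc m) \<subseteq> (\<Union>k\<in>{..<Suc m}. (#) (Suc k) ` compositions (m - k))"
  proof
    fix xs assume a: "xs \<in> compositions (Suc m)"
    then obtain b ys where xs: "xs = b # ys" by (cases xs) (auto simp: compositions_def)
    with a have "0 < b" "b \<le> Suc m" "ys \<in> compositions (m - (b - 1))"
      by (auto simp: compositions_def)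
    thus "xs \<in> (\<Union>k\<in>{..<Suc m}. (#) (Suc k) ` compositions (m - k))"
      using xs by (intro UN_I[of "b - 1"]) auto
  qed
  show "(\<Union>k\<in>{..<Suc m}. (#) (Suc k) ` compositions (m - k)) \<subseteq> compositions (Suc m)"
    by (auto simp: compositions_def)
qed

lemma S0: "S 0 = 1" by (simp add: S_def comp0 g_def)

lemma SSuc: "S (Suc m) = (\<Sum>k<Suc m. w (Suc k) * S (m - k))"
proof -
  have "S (Suc m) = (\<Sum>k<Suc m. \<Sum>as\<in>(#) (Suc k) ` compositions (m - k). g as)"
    unfolding S_def compSuc
    by (rule sum.UNION_disjoint) (auto simp: comp_fin)
  also have "\<dots> = (\<Sum>k<Suc m. w (Suc k) * S (m - k))"
  proof (rule sum.cong[OF refl])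
    fix k
    have "(\<Sum>as\<in>(#) (Suc k) ` compositions (m - k). g as) = (\<Sum>as\<in>compositions (m - k). g (Suc k # as))"
      by (subst sum.reindex) (auto simp: inj_on_def)
    also have "\<dots> = w (Suc k) * S (m - k)" by (simp add: g_cons S_def sum_distrib_left)
    finally show "(\<Sum>as\<in>(#) (Suc k) ` compositions (m - k). g as) = w (Suc k) * S (m - k)" .
  qed
  finally show ?thesis .
qed

lemma SSS: "S (Suc (Suc m)) = 2 * S (Suc m) + (\<Sum>k<Suc m. S k)"
proof -
  have w1: "w (Suc 0) = 0" by (simp add: w_def)
  have w2: "w (Suc (Suc k)) = 2 * w (Suc k) + 1" for k by (simp add: w_def)
  have "S (Suc (Suc m)) = (\<Sum>k<Suc m. w (Suc (Suc k)) * S (m - k))"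
    by (simp only: SSuc sum.lessThan_Suc_shift) (simp add: w1)
  also have "\<dots> = 2 * (\<Sum>k<Suc m. w (Suc k) * S (m - k)) + (\<Sum>k<Suc m. S (m - k))"
    by (simp add: w2 algebra_simps sum.distrib sum_distrib_left)
  also have "(\<Sum>k<Suc m. S (m - k)) = (\<Sum>k<Suc m. S k)"
    using sum.nat_diff_reindex[of S "Suc m"] by simp
  finally show ?thesis by (simp add: SSuc)
qed

lemma S3: "S (Suc (Suc (Suc m))) = 3 * S (Suc (Suc m)) - S (Suc m)"
  using SSS[of "Suc m"] SSS[of m] by simp

lemma Sfib: "S (Suc m) = int (fib (2 * m))"
proof (induction m rule: fib.induct)
  case 1 then show ?case using SSuc[of 0] by (simp add: S0 w_def)
next
  case 2 then show ?case using SSS[of 0] SSuc[of 0] by (simp add: S0 w_def numeral_2_eq_2)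
next
  case (3 m)
  have f: "fib (2 * Suc (Suc m)) + fib (2 * m) = 3 * fib (2 * Suc m)"
    by (simp add: numeral_2_eq_2 numeral_3_eq_3)
  show ?case using S3[of m] 3 f by (simp add: of_nat_mult[symmetric])
qed

theorem mainTheorem12:
  fixes n :: nat
  assumes "n \<ge> 1"
  shows "int (fib (2 * n - 2)) =
    (\<Sum>as\<in>compositions n. \<Prod>i<length as. (2::int) ^ (as ! i - 1) - 1)"
proof -
  obtain m where n: "n = Suc m" using assms by (cases n) auto
  have "2 * n - 2 = 2 * m" using n by simp
  thus ?thesis using Sfib[of m] n by (simp add: S_def g_alt)
qed

end
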